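(* Fix an integer $d\ge1$ and let $S_d=\langle a_0,\dots,a_d,s\mid s a_0 s^{-1}a_0^{-1},\ a_{i+1}a_ia_{i+1}^{-1}a_0^{-1}\ (0\le i<d)\rangle$. For every generator $u\in\{s,a_0,\dots,a_{d-1}\}$ (i.e., every generator $u\neq a_d$) we have \[ \bigl|\mathrm{erim}(\mathrm{Fan}(u^n,a_d^n))\bigr|\asymp n^d,\qquad \mathrm{Area}(\mathrm{Fan}(u^n,a_d^n))\asymp n^{d+1}. \]
   Context: For functions $f,g$ on positive integers, $f\asymp g$ means there are constants $c,C>0$ with $c\,g(n)\le f(n)\le C\,g(n)$ for all $n\ge1$. $\mathrm{Area}$ of a fan is its number of square $2$-cells, and $|w|$ is word length. Each relator of $S_d$ has the form $\lambda p\lambda^{-1}q^{-1}$ with $(\lambda,p,q)=(s,a_0,a_0)$ or $(a_{i+1},a_i,a_0)$. In the unit square of such a relator in the presentation complex, reading from a corner $B$: $\lambda$ goes from $B$ to $Q$, $p$ from $Q$ to the top corner $T$, $\lambda$ from $R$ to $T$, $q$ from $B$ to $R$; the edges $p,\lambda$ into $T$ are the top edges. The descending link is the graph on the generators in which $u,v$ are adjacent iff some relator square has top edges labeled $u$ and $v$; for $S_d$ it is the path $s - a_0 - a_1 - \cdots - a_d$, and each adjacent pair corresponds to a unique relator. For a relator $e$ put $x_e=q^{-1}\lambda$. Simple fans: $\mathrm{Fan}(a,a)$ is a single edge labeled $a$ (apex at its end), empty rims, no squares. For distinct generators $a,b$, let $a=v_0,\dots,v_k=b$ be the path in the descending link,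 take copies $C_i$ of the relator square with top edges $v_{i-1},v_i$, and glue the top edge $v_i$ of $C_i$ to that of $C_{i+1}$ ($1\le i<k$); the common top corner is the apex. The vertex rim is the concatenation of the two-letter words read along the bottom of $C_i$ from the initial vertex of its top edge $v_{i-1}$ to the initial vertex of its top edge $v_i$ (each is $q^{-1}\lambda$ or $\lambda^{-1}q$), so it has the form $a_1^{-1}b_1\cdots a_k^{-1}b_k$; the edge rim $\mathrm{erim}$ replaces $q^{-1}\lambda$ by $x_e$ and $\lambda^{-1}q$ by $x_e^{-1}$. Fans of height $n\ge2$: for positive words $u=au'$, $v=bv'$ of length $n$ with $a,b$ generators, let $F'=\mathrm{Fan}(u',v')$ with vertex rim $a_1^{-1}b_1\cdots a_k^{-1}b_k$, put $b_0=a$, $a_{k+1}=b$, and attach for $i=1,\dots,k+1$ the simple fan $\mathrm{Fan}(b_{i-1},a_i)$ with apex at the rim vertex where the edges $b_{i-1}$ and $a_i$ terminate (for $i=1$, the initial vertex of the side $u'$, the new edge $a$ extending that side; symmetrically for $i=k+1$), identifying its top edges with the corresponding edges. This is $\mathrm{Fan}(u,v)$; its vertex and edge rims are the concatenations of those of the attached simple fans. *)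

theory Defs
  imports Complex_Main
begin

(* Generators of S_d: s = S, a_i = A i (valid for i <= d). *)
datatype gen = S | A nat

(* Relators lambda p lambda^-1 q^-1 of S_d:
   Rs    : (lambda,p,q) = (s, a_0, a_0)
   Ra i  : (lambda,p,q) = (a_(i+1), a_i, a_0)   (valid for i < d) *)
datatype rel = Rs | Ra nat

fun lam :: "rel \<Rightarrow> gen" where
  "lam Rs = S" | "lam (Ra i) = A (Suc i)"
fun pp :: "rel \<Rightarrow> gen" where
  "pp Rs = A 0" | "pp (Ra i) = A i"
fun qq :: "rel \<Rightarrow> gen" where
  "qq Rs = A 0" | "qq (Ra i) = A 0"

(* Descending link of S_d: the path s - a_0 - a_1 - ... - a_d.
   Position of a generator along this path, and its inverse. *)
fun idx :: "gen \<Rightarrow> nat" where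
  "idx S = 0" | "idx (A i) = Suc i"
fun gen_of :: "nat \<Rightarrow> gen" where
  "gen_of 0 = S" | "gen_of (Suc i) = A i"

(* the unique relator whose square has top edges labelled u and v, for
   u, v adjacent in the descending link (top edges of e are pp e and lam e) *)
definition rel_of :: "gen \<Rightarrow> gen \<Rightarrow> rel" where
  "rel_of u v = (if min (idx u) (idx v) = 0 then Rs else Ra (min (idx u) (idx v) - 1))"

definition dpath :: "gen \<Rightarrow> gen \<Rightarrow> gen list" where
  "dpath a b = map gen_of (if idx a \<le> idx b then [idx a ..< Suc (idx b)]
                           else rev [idx b ..< Suc (idx a)])"

(* Contribution of the square C_i with top edges v_(i-1), v_i:
   vertex-rim piece a^-1 b stored as the pair (a,b); edge-rim letter x_e^(+-1)
   stored as (e, True) for x_e and (e, False) for x_e^-1.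
   Reading from the initial vertex of the top edge v_(i-1) to that of v_i:
   if v_(i-1) = p (initial vertex Q) the word is lambda^-1 q (letter x_e^-1);
   if v_(i-1) = lambda (initial vertex R) the word is q^-1 lambda (letter x_e). *)
definition square_piece :: "gen \<times> gen \<Rightarrow> (gen \<times> gen) \<times> (rel \<times> bool)" where
  "square_piece uv = (let e = rel_of (fst uv) (snd uv) in
      if fst uv = pp e then ((lam e, qq e), (e, False)) else ((qq e, lam e), (e, True)))"

type_synonym fan_data = "(gen \<times> gen) list \<times> (rel \<times> bool) list \<times> nat"

definition sfan :: "gen \<Rightarrow> gen \<Rightarrow> fan_data" where
  "sfan a b = (let vs = dpath a b; sq = zip vs (tl vs) in
     (map (fst \<circ> square_piece) sq, map (snd \<circ> square_piece) sq, length sq))"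

definition vrim :: "fan_data \<Rightarrow> (gen \<times> gen) list" where "vrim F = fst F"
definition erim :: "fan_data \<Rightarrow> (rel \<times> bool) list" where "erim F = fst (snd F)"
definition Area :: "fan_data \<Rightarrow> nat" where "Area F = snd (snd F)"

(* Fan(u,v) for positive words u, v of the same length n >= 1.
   For n >= 2: u = a u', v = b v', F' = Fan(u',v') with vertex rim
   a_1^-1 b_1 ... a_k^-1 b_k; attach Fan(b_(i-1), a_i), i = 1..k+1,
   with b_0 = a, a_(k+1) = b. *)
fun Fan :: "gen list \<Rightarrow> gen list \<Rightarrow> fan_data" where
  "Fan (a # u') (b # v') =
     (if u' = [] then sfan a b
      else (let F' = Fan u' v';
                bs = a # map snd (vrim F');
                as = map fst (vrim F') @ [b];
                Fs = map (\<lambda>(x, y). sfan x y) (zip bs as)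
            in (concat (map vrim Fs), concat (map erim Fs),
                Area F' + sum_list (map Area Fs))))"
| "Fan _ _ = ([], [], 0)"

definition asymp_eq :: "(nat \<Rightarrow> real) \<Rightarrow> (nat \<Rightarrow> real) \<Rightarrow> bool" where
  "asymp_eq f g \<longleftrightarrow> (\<exists>c C. c > 0 \<and> C > 0 \<and>
      (\<forall>n\<ge>1. c * g n \<le> f n \<and> f n \<le> C * g n))"

end

theory Submission
  imports Defs
begin


definition pr :: "nat \<Rightarrow> gen \<times> gen" where
  "pr t = (gen_of (Suc t), gen_of (min t 1))"

lemma idx_gen_of[simp]: "idx (gen_of k) = k" by (cases k) auto
lemma gen_of_idx[simp]: "gen_of (idx a) = a" by (cases a) auto

lemma sp: "fst (square_piece (gen_of k, A k)) = pr k"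
  by (cases k) (auto simp: square_piece_def rel_of_def pr_def Let_def)

lemma zipupt: "i \<le> j \<Longrightarrow> zip (map f [i..<Suc j]) (tl (map f [i..<Suc j])) = map (\<lambda>k. (f k, f (Suc k))) [i..<j]"
  by (rule nth_equalityI) (auto simp: nth_tl simp del: upt_Suc)

lemma sfan_up:
  assumes "idx a \<le> idx b"
  shows "vrim (sfan a b) = map pr [idx a..<idx b]" "length (erim (sfan a b)) = idx b - idx a"
        "Area (sfan a b) = idx b - idx a"
proof -
  have z: "zip (dpath a b) (tl (dpath a b)) = map (\<lambda>k. (gen_of k, gen_of (Suc k))) [idx a..<idx b]"
    using assms zipupt[of "idx a" "idx b" gen_of] by (simp add: dpath_def del: upt_Suc)
  show "vrim (sfan a b) = map pr [idx a..<idx b]"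
    by (simp add: sfan_def vrim_def z Let_def sp)
  show "length (erim (sfan a b)) = idx b - idx a"
    unfolding sfan_def erim_def Let_def z by simp
  show "Area (sfan a b) = idx b - idx a"
    unfolding sfan_def Area_def Let_def z by simp
qed

definition chunks :: "nat \<Rightarrow> nat \<Rightarrow> nat list \<Rightarrow> (nat \<times> nat) list" where
  "chunks r d xs = zip (r # map (\<lambda>t. min t 1) xs) (map Suc xs @ [Suc d])"
definition T :: "nat \<Rightarrow> nat \<Rightarrow> nat list \<Rightarrow> nat list" where
  "T r d xs = concat (map (\<lambda>(x,y). [x..<y]) (chunks r d xs))"
fun L :: "nat \<Rightarrow> nat \<Rightarrow> nat \<Rightarrow> nat list" where
  "L r d 0 = [r..<Suc d]" | "L r d (Suc n) = T r d (L r d n)"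

definition inv :: "nat \<Rightarrow> nat \<Rightarrow> nat list \<Rightarrow> bool" where
  "inv r d xs = (xs \<noteq> [] \<and> hd xs = r \<and> (\<forall>t\<in>set xs. t \<le> d))"

lemma chunks_cons: "chunks r d (r # ys) = (r, Suc r) # zip (map (\<lambda>t. min t 1) (r # ys)) (map Suc ys @ [Suc d])"
  by (simp add: chunks_def)

lemma chunks_le: assumes "inv r d xs" "(x,y) \<in> set (chunks r d xs)" shows "x \<le> y"
proof -
  obtain ys where xs: "xs = r # ys" using assms(1) unfolding inv_def by (cases xs) auto
  show ?thesis
  proof (cases "(x,y) = (r, Suc r)")
    case True then show ?thesis by auto
  next
    case False
    then have "(x,y) \<in> set (zip (map (\<lambda>t. min t 1) (r # ys)) (map Suc ys @ [Suc d]))"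
      using assms(2) False unfolding xs chunks_cons by auto
    then have "x \<in> set (map (\<lambda>t. min t 1) (r # ys))" "y \<in> set (map Suc ys @ [Suc d])"
      by (auto dest: set_zip_leftD set_zip_rightD)
    then show ?thesis by auto
  qed
qed

lemma chunks_y: "(x,y) \<in> set (chunks r d xs) \<Longrightarrow> \<forall>t\<in>set xs. t \<le> d \<Longrightarrow> y \<le> Suc d"
  unfolding chunks_def by (auto dest!: set_zip_rightD)

lemma inv_T: assumes "inv r d xs" "r \<le> d" shows "inv r d (T r d xs)"
proof -
  obtain ys where xs: "xs = r # ys" using assms(1) unfolding inv_def by (cases xs) auto
  have "T r d xs = r # concat (map (\<lambda>(x,y). [x..<y]) (zip (map (\<lambda>t. min t 1) (r # ys)) (map Suc ys @ [Suc d])))"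
    by (simp add: T_def xs chunks_cons)
  moreover have "\<forall>t\<in>set (T r d xs). t \<le> d"
  proof
    fix t assume "t \<in> set (T r d xs)"
    then obtain x y where "(x,y) \<in> set (chunks r d xs)" "t < y" by (auto simp: T_def)
    with chunks_y[OF this(1)] assms(1) show "t \<le> d" by (auto simp: inv_def)
  qed
  ultimately show ?thesis by (simp add: inv_def)
qed

lemma inv_L: "r \<le> d \<Longrightarrow> inv r d (L r d n)"
proof (induction n)
  case 0 then show ?case unfolding inv_def by (auto simp add: upt_conv_Cons simp del: upt_Suc)
next
  case (Suc n) then show ?case by (simp add: inv_T)
qed

lemma fan_step:
  assumes "u' \<noteq> []" "vrim (Fan u' v') = map pr xs" "inv r d xs" "idx a = r" "b = A d"
  shows "vrim (Fan (a#u') (b#v')) = map pr (T r d xs)"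
    "length (erim (Fan (a#u') (b#v'))) = length (T r d xs)"
    "Area (Fan (a#u') (b#v')) = Area (Fan u' v') + length (T r d xs)"
proof -
  have Z: "zip (a # map snd (vrim (Fan u' v'))) (map fst (vrim (Fan u' v')) @ [b])
      = map (\<lambda>(x,y). (gen_of x, gen_of y)) (chunks r d xs)"
  proof -
    have "map (\<lambda>(x,y). (gen_of x, gen_of y)) (chunks r d xs) = zip (map gen_of (r # map (\<lambda>t. min t 1) xs)) (map gen_of (map Suc xs @ [Suc d]))"
      unfolding chunks_def zip_map_map ..
    moreover have "gen_of r = a" using assms(4) by auto
    ultimately show ?thesis using assms by (simp add: pr_def comp_def)
  qed
  have F: "Fan (a#u') (b#v') = (let Fs = map (\<lambda>(x,y). sfan (gen_of x) (gen_of y)) (chunks r d xs) in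
       (concat (map vrim Fs), concat (map erim Fs), Area (Fan u' v') + sum_list (map Area Fs)))"
    using assms(1) by (simp add: Let_def Z comp_def split_def)
  have c: "\<And>p. p \<in> set (chunks r d xs) \<Longrightarrow> fst p \<le> snd p" using chunks_le[OF assms(3)] by auto
  have v: "map (vrim \<circ> (\<lambda>(x,y). sfan (gen_of x) (gen_of y))) (chunks r d xs) = map (\<lambda>(x,y). map pr [x..<y]) (chunks r d xs)"
    by (rule map_cong) (auto simp: sfan_up dest: c)
  have e: "map (length \<circ> erim \<circ> (\<lambda>(x,y). sfan (gen_of x) (gen_of y))) (chunks r d xs) = map (length \<circ> (\<lambda>(x,y). [x..<y])) (chunks r d xs)"
    by (rule map_cong) (auto simp: sfan_up dest: c)
  have ar: "map (Area \<circ> (\<lambda>(x,y). sfan (gen_of x) (gen_of y))) (chunks r d xs) = map (length \<circ> (\<lambda>(x,y). [x..<y])) (chunks r d xs)"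
    by (rule map_cong) (auto simp: sfan_up dest: c)
  show "vrim (Fan (a#u') (b#v')) = map pr (T r d xs)"
  proof -
    have "vrim (Fan (a#u') (b#v')) = concat (map (vrim \<circ> (\<lambda>(x,y). sfan (gen_of x) (gen_of y))) (chunks r d xs))"
      by (subst F) (simp add: Let_def vrim_def)
    also have "\<dots> = concat (map (\<lambda>(x,y). map pr [x..<y]) (chunks r d xs))" by (simp only: v)
    also have "\<dots> = map pr (T r d xs)" by (simp add: T_def map_concat comp_def split_def)
    finally show ?thesis .
  qed
  show "length (erim (Fan (a#u') (b#v'))) = length (T r d xs)"
  proof -
    have "length (erim (Fan (a#u') (b#v'))) = sum_list (map (length \<circ> erim \<circ> (\<lambda>(x,y). sfan (gen_of x) (gen_of y))) (chunks r d xs))"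
      by (subst F) (simp add: Let_def erim_def length_concat o_assoc)
    also have "\<dots> = sum_list (map (length \<circ> (\<lambda>(x,y). [x..<y])) (chunks r d xs))" by (simp only: e)
    also have "\<dots> = length (T r d xs)" by (simp add: T_def length_concat)
    finally show ?thesis .
  qed
  show "Area (Fan (a#u') (b#v')) = Area (Fan u' v') + length (T r d xs)"
  proof -
    have "Area (Fan (a#u') (b#v')) = Area (Fan u' v') + sum_list (map (Area \<circ> (\<lambda>(x,y). sfan (gen_of x) (gen_of y))) (chunks r d xs))"
      by (subst F) (simp add: Let_def Area_def)
    also have "\<dots> = Area (Fan u' v') + sum_list (map (length \<circ> (\<lambda>(x,y). [x..<y])) (chunks r d xs))" by (simp only: ar)
    also have "\<dots> = Area (Fan u' v') + length (T r d xs)" by (simp add: T_def length_concat)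
    finally show ?thesis .
  qed
qed

lemma fan_L:
  assumes "idx u = r" "r \<le> d"
  shows "vrim (Fan (replicate (Suc n) u) (replicate (Suc n) (A d))) = map pr (L r d n)
       \<and> length (erim (Fan (replicate (Suc n) u) (replicate (Suc n) (A d)))) = length (L r d n)
       \<and> Area (Fan (replicate (Suc n) u) (replicate (Suc n) (A d))) = (\<Sum>k\<le>n. length (L r d k))"
proof (induction n)
  case 0
  have "idx u \<le> idx (A d)" using assms by simp
  then show ?case using sfan_up[of u "A d"] assms by (simp del: upt_Suc)
next
  case (Suc n)
  have i: "inv r d (L r d n)" using inv_L assms by auto
  have "replicate (Suc (Suc n)) u = u # replicate (Suc n) u" by simp
  moreover have "replicate (Suc (Suc n)) (A d) = A d # replicate (Suc n) (A d)" by simp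
  ultimately show ?case using fan_step[of "replicate (Suc n) u" "replicate (Suc n) (A d)" "L r d n" r d u "A d"] Suc i assms
    by simp
qed


definition cnt :: "nat \<Rightarrow> nat list \<Rightarrow> nat" where "cnt j xs = length (filter (\<lambda>t. j \<le> t) xs)"
definition zc :: "nat list \<Rightarrow> nat" where "zc xs = length (filter (\<lambda>t. t = 0) xs)"

lemma cnt_upt: "cnt j [x..<y] = y - max x j"
  unfolding cnt_def
proof (induction y)
  case 0 then show ?case by simp
next
  case (Suc y)
  show ?case
  proof (cases "x \<le> y")
    case True then show ?thesis using Suc by (cases "j \<le> y") (auto simp: max_def)
  next
    case False then show ?thesis by simp
  qed
qed
lemma cnt_app: "cnt j (xs @ ys) = cnt j xs + cnt j ys" by (simp add: cnt_def)
lemma zc_app: "zc (xs @ ys) = zc xs + zc ys" by (simp add: zc_def)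

lemma zc_upt: "zc [x..<y] = (if x = 0 \<and> 0 < y then 1 else 0)"
  unfolding zc_def
proof (induction y)
  case 0 then show ?case by simp
next
  case (Suc y)
  show ?case
  proof (cases "x \<le> y")
    case True then show ?thesis using Suc by (cases "y = 0") auto
  next
    case False then show ?thesis by simp
  qed
qed

lemma cnt_concat: "cnt j (concat xss) = sum_list (map (cnt j) xss)"
  by (induction xss) (auto simp: cnt_def)
lemma zc_concat: "zc (concat xss) = sum_list (map zc xss)"
  by (induction xss) (auto simp: zc_def)
lemma cnt_cons: "cnt m (r # ys) = (if m \<le> r then 1 else 0) + cnt m ys"
  by (simp add: cnt_def)
lemma zc_cons: "zc (r # ys) = (if r = 0 then 1 else 0) + zc ys"
  by (simp add: zc_def)

lemma sum_zip_left: "length As = length Bs \<Longrightarrow> \<forall>x\<in>set As. x \<le> j \<Longrightarrow>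
   sum_list (map (\<lambda>(x,y). y - max x j) (zip As Bs)) = sum_list (map (\<lambda>y. y - j) Bs)"
proof (induction As arbitrary: Bs)
  case Nil then show ?case by simp
next
  case (Cons a As) then show ?case by (cases Bs) (auto simp: max_def)
qed

lemma zc_zip: "length As = length Bs \<Longrightarrow> \<forall>y\<in>set Bs. 0 < y \<Longrightarrow>
   sum_list (map (\<lambda>(x,y). if x = 0 \<and> 0 < y then 1 else 0) (zip As Bs)) = zc As"
proof (induction As arbitrary: Bs)
  case Nil then show ?case by (simp add: zc_def)
next
  case (Cons a As) then show ?case by (cases Bs) (auto simp: zc_cons)
qed

lemma len_split: "length xs = zc xs + cnt 1 xs"
  by (induction xs) (auto simp: zc_def cnt_def)

lemma sum_ind: "r \<le> d \<Longrightarrow> (\<Sum>m=j..d. if m \<le> r then 1 else 0::nat) = Suc r - j"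
proof -
  assume "r \<le> d"
  have "(\<Sum>m=j..d. if m \<le> r then 1 else 0::nat) = card ({j..d} \<inter> {m. m \<le> r})"
    by (simp add: sum.If_cases)
  also have "{j..d} \<inter> {m. m \<le> r} = {j..r}" using \<open>r \<le> d\<close> by auto
  finally show ?thesis by simp
qed

lemma sum_cnt: "\<forall>t\<in>set ys. t \<le> d \<Longrightarrow> sum_list (map (\<lambda>t. Suc t - j) ys) = (\<Sum>m=j..d. cnt m ys)"
proof (induction ys)
  case Nil then show ?case by (simp add: cnt_def)
next
  case (Cons t ys)
  have "(\<Sum>m=j..d. cnt m (t # ys)) = (\<Sum>m=j..d. if m \<le> t then 1 else 0) + (\<Sum>m=j..d. cnt m ys)"
    by (simp add: cnt_cons sum.distrib)
  also have "\<dots> = Suc t - j + (\<Sum>m=j..d. cnt m ys)" using Cons.prems by (simp add: sum_ind)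
  finally show ?case using Cons by simp
qed

lemma T_cons: "T r d (r # ys) = [r..<Suc r] @ concat (map (\<lambda>(x,y). [x..<y]) (zip (map (\<lambda>t. min t 1) (r # ys)) (map Suc ys @ [Suc d])))"
  unfolding T_def chunks_cons by simp

lemma cnt_T: assumes "1 \<le> j" shows "cnt j (T r d (r # ys)) = (if j \<le> r then 1 else 0) + sum_list (map (\<lambda>t. Suc t - j) ys) + (Suc d - j)"
proof -
  have "cnt j (T r d (r # ys)) = cnt j [r..<Suc r] + sum_list (map (\<lambda>(x,y). y - max x j) (zip (map (\<lambda>t. min t 1) (r # ys)) (map Suc ys @ [Suc d])))"
    unfolding T_cons cnt_app cnt_concat by (simp add: cnt_def[symmetric] cnt_upt split_def comp_def del: upt_Suc)
  also have "sum_list (map (\<lambda>(x,y). y - max x j) (zip (map (\<lambda>t. min t 1) (r # ys)) (map Suc ys @ [Suc d])))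
      = sum_list (map (\<lambda>y. y - j) (map Suc ys @ [Suc d]))"
    by (rule sum_zip_left) (use assms in auto)
  finally show ?thesis by (simp add: cnt_upt comp_def cnt_def)
qed

lemma zc_T: "zc (T r d (r # ys)) = (if r = 0 then 1 else 0) + zc (r # ys)"
proof -
  have "zc (T r d (r # ys)) = zc [r..<Suc r] + sum_list (map (\<lambda>(x,y). if x = 0 \<and> 0 < y then 1 else 0) (zip (map (\<lambda>t. min t 1) (r # ys)) (map Suc ys @ [Suc d])))"
    unfolding T_cons zc_app zc_concat by (simp add: zc_def[symmetric] zc_upt split_def comp_def del: upt_Suc)
  also have "sum_list (map (\<lambda>(x,y). if x = 0 \<and> 0 < y then 1 else 0) (zip (map (\<lambda>t. min t 1) (r # ys)) (map Suc ys @ [Suc d])))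
      = zc (map (\<lambda>t. min t 1) (r # ys))"
    by (rule zc_zip) auto
  also have "zc (map (\<lambda>t. min t 1) (r # ys)) = zc (r # ys)"
  proof -
    have "(\<lambda>x. min x (Suc 0) = 0) = (\<lambda>t. t = (0::nat))" by auto
    then show ?thesis by (simp add: zc_def filter_map comp_def)
  qed
  finally show ?thesis by (simp add: zc_upt zc_def)
qed


lemma binom_up: "(M + e choose e) \<le> (M+1)^e"
proof (induction e)
  case 0 then show ?case by simp
next
  case (Suc e)
  have eq: "Suc e * (M + Suc e choose Suc e) = Suc (M + e) * (M + e choose e)"
    using Suc_times_binomial[of e "M+e"] by simp
  have "Suc (M + e) * (M + e choose e) \<le> Suc (M + e) * (M+1)^e" using Suc.IH by (rule mult_left_mono) simp
  also have "\<dots> \<le> (Suc e * (M+1)) * (M+1)^e" by (intro mult_right_mono) (auto simp: algebra_simps)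
  finally have "Suc e * (M + Suc e choose Suc e) \<le> Suc e * (M+1)^Suc e" using eq by (simp add: algebra_simps)
  then show ?case by (subst (asm) mult_le_cancel1) (simp del: mult_Suc power_Suc)
qed

lemma binom_low: "(M+1)^e \<le> fact e * (M + e choose e)"
proof (induction e)
  case 0 then show ?case by simp
next
  case (Suc e)
  have eq: "Suc e * (M + Suc e choose Suc e) = Suc (M + e) * (M + e choose e)"
    using Suc_times_binomial[of e "M+e"] by simp
  have "(M+1)^Suc e = (M+1) * (M+1)^e" by simp
  also have "\<dots> \<le> Suc (M + e) * (fact e * (M + e choose e))" using Suc by (intro mult_mono) auto
  also have "\<dots> = fact e * (Suc e * (M + Suc e choose Suc e))" using eq by (simp add: algebra_simps)
  also have "\<dots> = fact (Suc e) * (M + Suc e choose Suc e)" by (simp add: algebra_simps)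
  finally show ?case .
qed

lemma hockey: "(\<Sum>f=1..e. (n + f choose f)) + 1 = (Suc n + e choose e)"
proof -
  have "(\<Sum>k\<le>e. (n+k) choose k) = Suc (n+e) choose e" by (rule sum_choose_lower)
  moreover have "(\<Sum>k\<le>e. (n+k) choose k) = (\<Sum>f=1..e. (n + f choose f)) + 1"
  proof -
    have "{..e} = insert 0 {1..e}" by auto
    then show ?thesis by simp
  qed
  ultimately show ?thesis by simp
qed

lemma growth:
  fixes h :: "nat \<Rightarrow> nat \<Rightarrow> nat"
  assumes base: "\<And>e. 1 \<le> e \<Longrightarrow> e \<le> d \<Longrightarrow> 1 \<le> h 0 e \<and> h 0 e \<le> B"
    and step: "\<And>n e. 1 \<le> e \<Longrightarrow> e \<le> d \<Longrightarrow> (\<Sum>f=1..e. h n f) + 1 \<le> h (Suc n) e \<and> h (Suc n) e \<le> (\<Sum>f=1..e. h n f) + B"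
    and B: "1 \<le> B"
  shows "1 \<le> e \<Longrightarrow> e \<le> d \<Longrightarrow> (n+e choose e) \<le> h n e \<and> h n e \<le> B * (n+e choose e)"
proof (induction n arbitrary: e)
  case 0 then show ?case using base[of e] by simp
next
  case (Suc n)
  have lo: "(\<Sum>f=1..e. (n + f choose f)) \<le> (\<Sum>f=1..e. h n f)"
    by (rule sum_mono) (use Suc in auto)
  have hi: "(\<Sum>f=1..e. h n f) \<le> (\<Sum>f=1..e. B * (n + f choose f))"
    by (rule sum_mono) (use Suc in auto)
  have H: "(\<Sum>f=1..e. (n + f choose f)) + 1 = (Suc n + e choose e)" by (rule hockey)
  have s: "(\<Sum>f=1..e. h n f) + 1 \<le> h (Suc n) e \<and> h (Suc n) e \<le> (\<Sum>f=1..e. h n f) + B"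
    using step Suc.prems by blast
  have "(Suc n + e choose e) \<le> h (Suc n) e" using lo s H by linarith
  moreover have "h (Suc n) e \<le> B * (Suc n + e choose e)"
  proof -
    have "h (Suc n) e \<le> (\<Sum>f=1..e. B * (n + f choose f)) + B" using s hi by linarith
    also have "\<dots> = B * ((\<Sum>f=1..e. (n + f choose f)) + 1)" by (simp add: sum_distrib_left algebra_simps)
    also have "\<dots> = B * (Suc n + e choose e)" by (simp only: H)
    finally show ?thesis .
  qed
  ultimately show ?case by simp
qed


lemma reindex: "e \<le> d \<Longrightarrow> (\<Sum>m=Suc d - e..d. \<phi> m) = (\<Sum>f=1..e. \<phi> (Suc d - f))"
proof (induction e)
  case 0 then show ?case by simp
next
  case (Suc e)
  have a: "{d - e..d} = insert (d - e) {Suc d - e..d}" using Suc.prems by auto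
  have b: "{1..Suc e} = insert (Suc e) {1..e}" by auto
  show ?case using Suc by (simp add: a b add.commute)
qed

lemma rec_j:
  assumes "r \<le> d" "1 \<le> j" "j \<le> d" "inv r d xs"
  shows "(\<Sum>m=j..d. cnt m xs) + 1 \<le> cnt j (T r d xs) \<and> cnt j (T r d xs) \<le> (\<Sum>m=j..d. cnt m xs) + Suc d"
proof -
  obtain ys where xs: "xs = r # ys" using assms(4) unfolding inv_def by (cases xs) auto
  have yd: "\<forall>t\<in>set ys. t \<le> d" using assms(4) xs by (auto simp: inv_def)
  define S where "S = (\<Sum>m=j..d. cnt m ys)"
  have c1: "cnt j (T r d xs) = (if j \<le> r then 1 else 0) + S + (Suc d - j)"
    using cnt_T[OF assms(2), of r d ys] sum_cnt[OF yd, of j] by (simp add: xs S_def)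
  have c2: "(\<Sum>m=j..d. cnt m xs) = (Suc r - j) + S"
    by (simp add: xs cnt_cons sum.distrib sum_ind[OF assms(1)] S_def)
  show ?thesis using c1 c2 assms by auto
qed

lemma h_rec:
  assumes "r \<le> d" "1 \<le> e" "e \<le> d"
  shows "(\<Sum>f=1..e. cnt (Suc d - f) (L r d n)) + 1 \<le> cnt (Suc d - e) (L r d (Suc n))
       \<and> cnt (Suc d - e) (L r d (Suc n)) \<le> (\<Sum>f=1..e. cnt (Suc d - f) (L r d n)) + Suc d"
  using rec_j[OF assms(1), of "Suc d - e" "L r d n"] inv_L[OF assms(1), of n] assms
    reindex[OF assms(3), of "\<lambda>m. cnt m (L r d n)"] by simp

lemma h_base:
  assumes "r \<le> d" "1 \<le> e" "e \<le> d"
  shows "1 \<le> cnt (Suc d - e) (L r d 0) \<and> cnt (Suc d - e) (L r d 0) \<le> Suc d"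
  using assms by (simp add: cnt_upt del: upt_Suc)

lemma cnt1_bounds:
  assumes "r \<le> d" "1 \<le> d"
  shows "(n+d choose d) \<le> cnt 1 (L r d n) \<and> cnt 1 (L r d n) \<le> Suc d * (n+d choose d)"
proof -
  have "(n+d choose d) \<le> (\<lambda>n e. cnt (Suc d - e) (L r d n)) n d \<and> (\<lambda>n e. cnt (Suc d - e) (L r d n)) n d \<le> Suc d * (n+d choose d)"
    by (rule growth[where d=d]) (use h_base h_rec assms in auto)
  then show ?thesis by simp
qed

lemma zc_L: assumes "r \<le> d" shows "zc (L r d n) \<le> Suc n"
proof (induction n)
  case 0
  have "zc [r..<Suc d] \<le> 1" by (simp add: zc_upt del: upt_Suc)
  then show ?case by simp
next
  case (Suc n)
  obtain ys where xs: "L r d n = r # ys" using inv_L[OF assms, of n] unfolding inv_def by (cases "L r d n") auto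
  have "zc (L r d (Suc n)) = (if r = 0 then 1 else 0) + zc (L r d n)" using zc_T[of r d ys] by (simp add: xs)
  then have "zc (L r d (Suc n)) \<le> 1 + zc (L r d n)" by (simp split: if_split_asm)
  then show ?case using Suc by linarith
qed

lemma len_bounds:
  assumes "r \<le> d" "1 \<le> d"
  shows "(n+d choose d) \<le> length (L r d n) \<and> length (L r d n) \<le> Suc n + Suc d * (n+d choose d)"
  using cnt1_bounds[OF assms, of n] zc_L[OF assms(1), of n] len_split[of "L r d n"] by simp


lemma len_nat:
  assumes "r \<le> d" "1 \<le> d"
  shows "(Suc n)^d \<le> fact d * length (L r d n) \<and> length (L r d n) \<le> (d+2) * (Suc n)^d"
proof -
  have b: "(n+d choose d) \<le> length (L r d n)" "length (L r d n) \<le> Suc n + Suc d * (n+d choose d)"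
    using len_bounds[OF assms] by auto
  have "(Suc n)^d \<le> fact d * (n+d choose d)" using binom_low[of n d] by simp
  also have "\<dots> \<le> fact d * length (L r d n)" using b(1) by (rule mult_left_mono) simp
  finally have 1: "(Suc n)^d \<le> fact d * length (L r d n)" .
  have "Suc n = (Suc n)^1" by simp
  also have "\<dots> \<le> (Suc n)^d" using assms(2) by (intro power_increasing) auto
  finally have s: "Suc n \<le> (Suc n)^d" .
  have "(n+d choose d) \<le> (Suc n)^d" using binom_up[of n d] by simp
  then have "Suc d * (n+d choose d) \<le> Suc d * (Suc n)^d" by (rule mult_left_mono) simp
  then have "length (L r d n) \<le> (d+2) * (Suc n)^d" using b(2) s by simp
  with 1 show ?thesis by simp
qed

lemma area_nat:
  assumes "r \<le> d" "1 \<le> d"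
  shows "(Suc n)^(d+1) \<le> fact (d+1) * (\<Sum>k\<le>n. length (L r d k)) \<and> (\<Sum>k\<le>n. length (L r d k)) \<le> (d+2) * (Suc n)^(d+1)"
proof
  have eq: "\<And>k. (k+d choose d) = (d+k choose k)"
    using binomial_symmetric by (metis add.commute add_diff_cancel_right' le_add2)
  have "(\<Sum>k\<le>n. (k+d choose d)) = Suc (d+n) choose n" unfolding eq by (rule sum_choose_lower)
  also have "\<dots> = (n + Suc d choose Suc d)"
    using binomial_symmetric[of n "Suc (d+n)"] by (simp add: add.commute)
  finally have h: "(\<Sum>k\<le>n. (k+d choose d)) = (n + (d+1) choose (d+1))" by simp
  have "(Suc n)^(d+1) \<le> fact (d+1) * (n + (d+1) choose (d+1))" using binom_low[of n "d+1"] by simp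
  also have "\<dots> \<le> fact (d+1) * (\<Sum>k\<le>n. length (L r d k))"
    unfolding h[symmetric] by (intro mult_left_mono sum_mono) (use len_bounds[OF assms] in auto)
  finally show "(Suc n)^(d+1) \<le> fact (d+1) * (\<Sum>k\<le>n. length (L r d k))" .
next
  have "(\<Sum>k\<le>n. length (L r d k)) \<le> (\<Sum>k\<le>n. (d+2) * (Suc n)^d)"
  proof (rule sum_mono)
    fix k assume "k \<in> {..n}"
    then have "(Suc k)^d \<le> (Suc n)^d" by (intro power_mono) auto
    then show "length (L r d k) \<le> (d+2) * (Suc n)^d" using len_nat[OF assms, of k]
      by (meson le_trans mult_le_mono2)
  qed
  also have "\<dots> = (d+2) * (Suc n)^(d+1)" by (simp add: algebra_simps)
  finally show "(\<Sum>k\<le>n. length (L r d k)) \<le> (d+2) * (Suc n)^(d+1)" .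
qed

lemma asymp_nat:
  fixes F :: "nat \<Rightarrow> nat"
  assumes "\<And>N. N \<ge> 1 \<Longrightarrow> N^e \<le> K * F N \<and> F N \<le> C * N^e" "K > 0" "C > 0"
  shows "asymp_eq (\<lambda>n. real (F n)) (\<lambda>n. real n ^ e)"
  unfolding asymp_eq_def
proof (rule exI[of _ "1 / real K"], rule exI[of _ "real C"], intro conjI allI impI)
  show "0 < 1 / real K" "0 < real C" using assms by auto
  fix n :: nat assume n: "1 \<le> n"
  have a: "real n ^ e \<le> real K * real (F n)" using assms(1)[OF n]
    by (metis of_nat_le_iff of_nat_mult of_nat_power)
  show "1 / real K * real n ^ e \<le> real (F n)" using a assms(2)
    by (simp add: field_simps)
  show "real (F n) \<le> real C * real n ^ e" using assms(1)[OF n]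
    by (metis of_nat_le_iff of_nat_mult of_nat_power)
qed

theorem mainTheorem6:
  fixes d :: nat and u :: gen
  assumes "d \<ge> 1"
    and "u = S \<or> (\<exists>i<d. u = A i)"
  shows "asymp_eq (\<lambda>n. real (length (erim (Fan (replicate n u) (replicate n (A d))))))
                  (\<lambda>n. real n ^ d)
       \<and> asymp_eq (\<lambda>n. real (Area (Fan (replicate n u) (replicate n (A d)))))
                  (\<lambda>n. real n ^ (d + 1))"
proof -
  define r where "r = idx u"
  have rd: "r \<le> d" using assms(2) unfolding r_def by auto
  have key: "\<And>N. N \<ge> 1 \<Longrightarrow> length (erim (Fan (replicate N u) (replicate N (A d)))) = length (L r d (N - 1))
      \<and> Area (Fan (replicate N u) (replicate N (A d))) = (\<Sum>k\<le>N-1. length (L r d k))"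
  proof -
    fix N :: nat assume "N \<ge> 1"
    then obtain n where N: "N = Suc n" by (cases N) auto
    show "?thesis N" using fan_L[OF r_def[symmetric] rd, of n] by (simp add: N)
  qed
  show ?thesis
  proof
    show "asymp_eq (\<lambda>n. real (length (erim (Fan (replicate n u) (replicate n (A d)))))) (\<lambda>n. real n ^ d)"
    proof (rule asymp_nat[where K="fact d" and C="d+2"])
      fix N :: nat assume N1: "N \<ge> 1"
      then obtain n where N: "N = Suc n" by (cases N) auto
      show "N^d \<le> fact d * length (erim (Fan (replicate N u) (replicate N (A d))))
           \<and> length (erim (Fan (replicate N u) (replicate N (A d)))) \<le> (d+2) * N^d"
        using key[OF N1] len_nat[OF rd assms(1), of n] by (simp add: N)
    qed auto
    show "asymp_eq (\<lambda>n. real (Area (Fan (replicate n u) (replicate n (A d))))) (\<lambda>n. real n ^ (d + 1))"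
    proof (rule asymp_nat[where K="fact (d+1)" and C="d+2"])
      fix N :: nat assume N1: "N \<ge> 1"
      then obtain n where N: "N = Suc n" by (cases N) auto
      show "N^(d+1) \<le> fact (d+1) * Area (Fan (replicate N u) (replicate N (A d)))
           \<and> Area (Fan (replicate N u) (replicate N (A d))) \<le> (d+2) * N^(d+1)"
        using key[OF N1] area_nat[OF rd assms(1), of n] by (simp only: N diff_Suc_1)
    qed auto
  qed
qed

end
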